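(* Let $\tilde\gamma$ be a closed edge path in the Artin complex $D(B_3)$ with 10 edges whose vertices alternate between type $\hat s_3$ and type $\hat s_2$. If $\tilde\gamma$ is contained in a Falk subcomplex of type $s_3$, then $\tilde\gamma$ is not embedded.
   Context: $A(B_3)=\langle s_1,s_2,s_3 \mid s_1s_2s_1=s_2s_1s_2,\ s_1s_3=s_3s_1,\ s_2s_3s_2s_3=s_3s_2s_3s_2\rangle$ and $W(B_3)$ is its quotient by $s_i^2=1$. For $i=1,2,3$, $\hat s_i$ denotes the standard parabolic subgroup generated by the other two generators. The Artin complex $D(B_3)$ (resp. Coxeter complex $C(B_3)$) has vertices the cosets $g\hat s_i$ in $A(B_3)$ (resp. $W(B_3)$), of type $\hat s_i$, and a set of vertices spans a simplex iff the cosets have nonempty common intersection. Let $\rho:D(B_3)\to C(B_3)$ be induced by $A(B_3)\to W(B_3)$. A Falk subcomplex of type $s_3$: take a reflection $r\in W(B_3)$ conjugate to $s_3$, let $H$ be the subcomplex of $C(B_3)$ fixed pointwise by $r$, choose a component of $C(B_3)\setminus H$, let $U$ be the largest closed subcomplex of $C(B_3)$ contained in it, and take a lift of $U$ along $\rho$ (a subcomplex of $D(B_3)$ mapped isomorphically onto $U$ by $\rho$). *)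

theory Defs
  imports Main
begin

text \<open>Words in the generators s1, s2, s3 and their inverses: a letter (i, True) is s_i,
  (i, False) is s_i inverse.  Group elements of A(B3) (resp. W(B3)) are equivalence classes
  of well-formed words modulo the congruence generated by free cancellation and the
  defining relations (plus s_i s_i = 1 in the Coxeter case, flag cox = True).\<close>

type_synonym word = "(nat \<times> bool) list"

definition wfw :: "word \<Rightarrow> bool" where
  "wfw w \<longleftrightarrow> set (map fst w) \<subseteq> {1,2,3}"

definition inv_word :: "word \<Rightarrow> word" where
  "inv_word w = rev (map (\<lambda>(i,b). (i, \<not> b)) w)"

inductive relator :: "bool \<Rightarrow> word \<Rightarrow> word \<Rightarrow> bool" for cox where
  braid12: "relator cox [(1,True),(2,True),(1,True)] [(2,True),(1,True),(2,True)]"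
| comm13: "relator cox [(1,True),(3,True)] [(3,True),(1,True)]"
| braid23: "relator cox [(2,True),(3,True),(2,True),(3,True)] [(3,True),(2,True),(3,True),(2,True)]"
| invol: "cox \<Longrightarrow> i \<in> {1,2,3} \<Longrightarrow> relator cox [(i,True),(i,True)] []"

inductive weq :: "bool \<Rightarrow> word \<Rightarrow> word \<Rightarrow> bool" for cox where
  refl: "weq cox w w"
| sym: "weq cox u v \<Longrightarrow> weq cox v u"
| trans: "weq cox u v \<Longrightarrow> weq cox v w \<Longrightarrow> weq cox u w"
| cancel: "weq cox (u @ [(i,b),(i,\<not> b)] @ v) (u @ v)"
| rel: "relator cox l r \<Longrightarrow> weq cox (u @ l @ v) (u @ r @ v)"

text \<open>The coset  g \<hat>s_i  (as a set of well-formed words), where \<hat>s_i is the standard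
  parabolic subgroup generated by the generators other than s_i.\<close>
definition coset :: "bool \<Rightarrow> nat \<Rightarrow> word \<Rightarrow> word set" where
  "coset cox i g = {v. wfw v \<and> (\<exists>u. set (map fst u) \<subseteq> {1,2,3} - {i} \<and> weq cox v (g @ u))}"

type_synonym vertex = "nat \<times> word set"

text \<open>Vertices of the Artin complex D(B3) (cox = False) / Coxeter complex C(B3) (cox = True):
  pairs (i, g\<hat>s_i); i is the type.\<close>
definition verts :: "bool \<Rightarrow> vertex set" where
  "verts cox = {(i, coset cox i g) | i g. i \<in> {1,2,3} \<and> wfw g}"

definition simplices :: "bool \<Rightarrow> vertex set set" where
  "simplices cox = {\<sigma>. finite \<sigma> \<and> \<sigma> \<noteq> {} \<and> \<sigma> \<subseteq> verts cox \<and> \<Inter> (snd ` \<sigma>) \<noteq> {}}"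

text \<open>The map rho : D(B3) \<rightarrow> C(B3) induced by A(B3) \<rightarrow> W(B3).\<close>
definition rho :: "vertex \<Rightarrow> vertex" where
  "rho v = (fst v, \<Union>w\<in>snd v. coset True (fst v) w)"

definition actW :: "word \<Rightarrow> vertex \<Rightarrow> vertex" where
  "actW r v = (fst v, \<Union>w\<in>snd v. coset True (fst v) (r @ w))"

definition reflection_s3 :: "word \<Rightarrow> bool" where
  "reflection_s3 r \<longleftrightarrow> (\<exists>g. wfw g \<and> r = g @ [(3,True)] @ inv_word g)"

definition nonfixed :: "word \<Rightarrow> vertex set" where
  "nonfixed r = {v \<in> verts True. actW r v \<noteq> v}"

definition cadj :: "word \<Rightarrow> (vertex \<times> vertex) set" where
  "cadj r = {(v,w). v \<in> nonfixed r \<and> w \<in> nonfixed r \<and> v \<noteq> w \<and> {v,w} \<in> simplices True}"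

text \<open>U: the largest closed subcomplex of C(B3) contained in the component of C(B3) - H
  containing the non-fixed vertex v0, i.e. the full subcomplex on the vertices of that
  component.\<close>
definition falk_U :: "word \<Rightarrow> vertex \<Rightarrow> vertex set set" where
  "falk_U r v0 = {\<sigma> \<in> simplices True. \<sigma> \<subseteq> (cadj r)\<^sup>* `` {v0}}"

text \<open>L (a set of simplices of D(B3)) is a Falk subcomplex of type s3: a subcomplex of D(B3)
  mapped isomorphically onto some U by rho.\<close>
definition falk_subcomplex_s3 :: "vertex set set \<Rightarrow> bool" where
  "falk_subcomplex_s3 L \<longleftrightarrow>
     (\<exists>r v0. reflection_s3 r \<and> v0 \<in> nonfixed r \<and>
        L \<subseteq> simplices False \<and>
        (\<forall>\<sigma>\<in>L. \<forall>\<tau>. \<tau> \<subseteq> \<sigma> \<and> \<tau> \<noteq> {} \<longrightarrow> \<tau> \<in> L) \<and>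
        inj_on rho (\<Union> L) \<and>
        (\<lambda>\<sigma>. rho ` \<sigma>) ` L = falk_U r v0)"

end

theory Submission
  imports Defs
begin

definition cnt3 :: "word \<Rightarrow> nat" where
  "cnt3 w = length (filter (\<lambda>l. fst l = 3) w)"

lemma cnt3_append[simp]: "cnt3 (u @ v) = cnt3 u + cnt3 v"
  by (simp add: cnt3_def)

lemma cnt3_Cons[simp]: "cnt3 (a # v) = (if fst a = 3 then Suc (cnt3 v) else cnt3 v)"
  by (simp add: cnt3_def)

lemma cnt3_Nil[simp]: "cnt3 [] = 0"
  by (simp add: cnt3_def)

lemma relator_par: "relator c l r \<Longrightarrow> even (cnt3 l) = even (cnt3 r)"
  by (induction rule: relator.induct) auto

lemma weq_par: "weq c u v \<Longrightarrow> even (cnt3 u) = even (cnt3 v)"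
proof (induction rule: weq.induct)
  case (rel l r u v)
  then show ?case using relator_par[OF rel.hyps] by auto
qed auto

lemma weq_cong: "weq c u v \<Longrightarrow> weq c (a @ u @ b) (a @ v @ b)"
proof (induction arbitrary: a b rule: weq.induct)
  case (refl w) then show ?case by (rule weq.refl)
next
  case (sym u v) then show ?case by (blast intro: weq.sym)
next
  case (trans u v w) then show ?case by (blast intro: weq.trans)
next
  case (cancel u i bb v)
  show ?case using weq.cancel[of c "a @ u" i bb "v @ b"] by simp
next
  case (rel l r u v)
  show ?case using weq.rel[OF rel.hyps, of "a @ u" "v @ b"] by simp
qed

lemma weq_congL: "weq c u v \<Longrightarrow> weq c (a @ u) (a @ v)"
  using weq_cong[of c u v a "[]"] by simp

lemma weq_congR: "weq c u v \<Longrightarrow> weq c (u @ b) (v @ b)"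
  using weq_cong[of c u v "[]" b] by simp

lemma relator_FT: "relator False l r \<Longrightarrow> relator True l r"
proof (induction rule: relator.induct)
qed (rule relator.intros; simp)+

lemma weq_FT: "weq False u v \<Longrightarrow> weq True u v"
proof (induction rule: weq.induct)
  case (cancel u i b v) show ?case by (rule weq.cancel)
next
  case (rel l r u v) show ?case by (rule weq.rel[OF relator_FT[OF rel.hyps]])
qed (auto intro: weq.sym weq.trans weq.refl)

lemma inv_word_Cons: "inv_word (a # u) = inv_word u @ [(fst a, \<not> snd a)]"
  by (cases a) (simp add: inv_word_def)

lemma inv_word_fst: "set (map fst (inv_word u)) = set (map fst u)"
  by (induction u) (auto simp: inv_word_Cons, simp add: inv_word_def)

lemma weq_inv: "weq c (u @ inv_word u) []"
proof (induction u)
  case Nil then show ?case by (simp add: inv_word_def weq.refl)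
next
  case (Cons a u)
  obtain i b where a: "a = (i,b)" by (cases a)
  have "weq c ([a] @ (u @ inv_word u) @ [(i, \<not> b)]) ([a] @ [] @ [(i, \<not> b)])"
    by (rule weq_cong[OF Cons])
  moreover have "weq c ([] @ [(i,b),(i,\<not> b)] @ []) ([] @ [])" by (rule weq.cancel)
  ultimately show ?case using a by (auto simp: inv_word_Cons intro: weq.trans)
qed

lemma coset_weq: "weq c g g' \<Longrightarrow> coset c i g = coset c i g'"
  unfolding coset_def
  by (auto; meson weq.trans weq.sym weq_congR)

lemma coset_app:
  assumes u: "set (map fst u) \<subseteq> {1,2,3} - {i}"
  shows "coset c i (g @ u) = coset c i g"
proof
  show "coset c i (g @ u) \<subseteq> coset c i g"
  proof
    fix v assume "v \<in> coset c i (g @ u)"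
    then obtain u' where "wfw v" "set (map fst u') \<subseteq> {1,2,3} - {i}" "weq c v (g @ u @ u')"
      unfolding coset_def by auto
    then show "v \<in> coset c i g" unfolding coset_def using u
      by (intro CollectI conjI exI[of _ "u @ u'"]) auto
  qed
next
  show "coset c i g \<subseteq> coset c i (g @ u)"
  proof
    fix v assume "v \<in> coset c i g"
    then obtain u' where "wfw v" "set (map fst u') \<subseteq> {1,2,3} - {i}" "weq c v (g @ u')"
      unfolding coset_def by auto
    have "weq c (g @ (u @ inv_word u) @ u') (g @ [] @ u')"
      by (rule weq_cong[OF weq_inv])
    then have "weq c v ((g @ u) @ (inv_word u @ u'))"
      using \<open>weq c v (g @ u')\<close> by (auto intro: weq.trans weq.sym)
    then show "v \<in> coset c i (g @ u)" unfolding coset_def using u \<open>wfw v\<close>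
        \<open>set (map fst u') \<subseteq> {1,2,3} - {i}\<close> inv_word_fst[of u]
      by (intro CollectI conjI exI[of _ "inv_word u @ u'"]) auto
  qed
qed

lemma coset_mem: "x \<in> coset c i g \<Longrightarrow> coset c i x = coset c i g"
proof -
  assume "x \<in> coset c i g"
  then obtain u where u: "set (map fst u) \<subseteq> {1,2,3} - {i}" "weq c x (g @ u)"
    unfolding coset_def by auto
  then show ?thesis using coset_weq[OF u(2)] coset_app[OF u(1)] by simp
qed

lemma coset_FT: "x \<in> coset False i g \<Longrightarrow> coset True i x = coset True i g"
proof -
  assume "x \<in> coset False i g"
  then obtain u where u: "set (map fst u) \<subseteq> {1,2,3} - {i}" "weq False x (g @ u)"
    unfolding coset_def by auto
  then show ?thesis using coset_weq[OF weq_FT[OF u(2)]] coset_app[OF u(1)] by simp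
qed

lemma rho_eq:
  assumes v: "v \<in> verts False" and x: "x \<in> snd v"
  shows "rho v = (fst v, coset True (fst v) x)"
proof -
  obtain i g where vg: "v = (i, coset False i g)" using v unfolding verts_def by auto
  have "\<And>w. w \<in> snd v \<Longrightarrow> coset True i w = coset True i g"
    using vg coset_FT by auto
  then have "(\<Union>w\<in>snd v. coset True (fst v) w) = coset True i g" using x vg by auto
  then show ?thesis unfolding rho_def using coset_FT x vg by auto
qed

lemma par_coset:
  assumes "x \<in> coset c i g" "y \<in> coset c i g" "i = 3"
  shows "even (cnt3 x) = even (cnt3 y)"
proof -
  have cu: "cnt3 u = 0" if "set (map fst u) \<subseteq> {1,2,3} - {i}" for u
    using that assms(3) unfolding cnt3_def by (auto simp: filter_empty_conv image_subset_iff)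
  obtain u where u: "set (map fst u) \<subseteq> {1,2,3} - {i}" "weq c x (g @ u)"
    using assms(1) unfolding coset_def by auto
  obtain u' where u': "set (map fst u') \<subseteq> {1,2,3} - {i}" "weq c y (g @ u')"
    using assms(2) unfolding coset_def by auto
  show ?thesis using weq_par[OF u(2)] weq_par[OF u'(2)] cu[OF u(1)] cu[OF u'(1)] by simp
qed

lemma inv_sq: "i \<in> {1,2,3} \<Longrightarrow> weq True [(i,b)] [(i,True)]"
proof (cases b)
  case False
  assume i: "i \<in> {1,2,3}"
  have "weq True ([(i,False)] @ [(i,True),(i,True)] @ []) ([(i,False)] @ [] @ [])"
    by (rule weq.rel, rule relator.invol, simp, rule i)
  moreover have "weq True ([] @ [(i,False),(i,\<not>False)] @ [(i,True)]) ([] @ [(i,True)])"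
    by (rule weq.cancel)
  ultimately show ?thesis using False by (auto intro: weq.trans weq.sym)
qed (simp add: weq.refl)

lemma comm3:
  assumes "set (map fst f) \<subseteq> {1}"
  shows "weq True ((3,True) # f) (f @ [(3,True)])"
  using assms
proof (induction f)
  case Nil then show ?case by (simp add: weq.refl)
next
  case (Cons a f)
  obtain b where a: "a = (1,b)" using Cons.prems by (cases a) auto
  have s1: "weq True [(1,b)] [(1,True)]" by (rule inv_sq) simp
  have e1: "weq True ([(3,True)] @ [(1,b)] @ f) ([(3,True)] @ [(1,True)] @ f)"
    by (rule weq_cong[OF s1])
  have e2: "weq True ([] @ [(3,True),(1,True)] @ f) ([] @ [(1,True),(3,True)] @ f)"
    by (rule weq.sym, rule weq.rel, rule relator.comm13)
  have e3: "weq True ([(1,True)] @ ((3,True) # f)) ([(1,True)] @ (f @ [(3,True)]))"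
    by (rule weq_congL, rule Cons.IH) (use Cons.prems in auto)
  have e4: "weq True ([] @ [(1,True)] @ (f @ [(3,True)])) ([] @ [(1,b)] @ (f @ [(3,True)]))"
    by (rule weq_cong, rule weq.sym, rule s1)
  show ?case using e1 e2 e3 e4 a by simp (meson weq.trans)
qed

lemma norm13:
  assumes "set (map fst u) \<subseteq> {1,3}"
  shows "\<exists>f. set (map fst f) \<subseteq> {1} \<and>
           weq True u (f @ (if even (cnt3 u) then [] else [(3,True)]))"
  using assms
proof (induction u)
  case Nil then show ?case by (intro exI[of _ "[]"]) (auto intro: weq.refl)
next
  case (Cons a u)
  obtain f where f: "set (map fst f) \<subseteq> {1}"
    "weq True u (f @ (if even (cnt3 u) then [] else [(3,True)]))"
    using Cons by auto
  obtain i b where a: "a = (i,b)" by (cases a)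
  have "i = 1 \<or> i = 3" using Cons.prems a by auto
  then show ?case
  proof
    assume i: "i = 1"
    have "weq True ([a] @ u @ []) ([a] @ (f @ (if even (cnt3 u) then [] else [(3,True)])) @ [])"
      by (rule weq_cong[OF f(2)])
    then show ?thesis using f(1) a i
      by (intro exI[of _ "a # f"]) auto
  next
    assume i: "i = 3"
    have s3: "weq True [(3,b)] [(3,True)]" by (rule inv_sq) simp
    have e1: "weq True ([] @ [(3,b)] @ u) ([] @ [(3,True)] @ u)" by (rule weq_cong[OF s3])
    have e2: "weq True ([(3,True)] @ u @ []) ([(3,True)] @ (f @ (if even (cnt3 u) then [] else [(3,True)])) @ [])"
      by (rule weq_cong[OF f(2)])
    have e3: "weq True ([] @ ((3,True) # f) @ (if even (cnt3 u) then [] else [(3,True)]))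
              ([] @ (f @ [(3,True)]) @ (if even (cnt3 u) then [] else [(3,True)]))"
      by (rule weq_cong[OF comm3[OF f(1)]])
    have e4: "weq True (f @ [(3,True),(3,True)] @ []) (f @ [] @ [])"
      by (rule weq.rel, rule relator.invol) auto
    have "weq True (a # u) (f @ [(3,True)] @ (if even (cnt3 u) then [] else [(3,True)]))"
      using e1 e2 e3 a i by (simp split del: if_split) (meson weq.trans)
    then show ?thesis using f(1) a i e4
      by (intro exI[of _ f]) (auto intro: weq.trans)
  qed
qed

lemma key2:
  assumes x: "x \<in> coset False 2 h" and y: "y \<in> coset False 2 h"
    and p: "even (cnt3 x) = even (cnt3 y)"
  shows "coset True 3 y = coset True 3 x"
proof -
  obtain u1 where u1: "set (map fst u1) \<subseteq> {1,2,3} - {2}" "weq False x (h @ u1)"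
    using x unfolding coset_def by auto
  obtain u2 where u2: "set (map fst u2) \<subseteq> {1,2,3} - {2}" "weq False y (h @ u2)"
    using y unfolding coset_def by auto
  have "weq True (h @ (u1 @ inv_word u1) @ u2) (h @ [] @ u2)"
    by (rule weq_cong[OF weq_inv])
  moreover have "weq True (x @ (inv_word u1 @ u2)) ((h @ u1) @ (inv_word u1 @ u2))"
    by (rule weq_congR[OF weq_FT[OF u1(2)]])
  ultimately have xy: "weq True y (x @ (inv_word u1 @ u2))"
    using weq_FT[OF u2(2)] by simp (meson weq.trans weq.sym)
  define u where "u = inv_word u1 @ u2"
  have us: "set (map fst u) \<subseteq> {1,3}" using u1(1) u2(1) inv_word_fst[of u1]
    unfolding u_def by auto
  have "even (cnt3 u)" using weq_par[OF xy] p unfolding u_def by auto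
  then obtain f where f: "set (map fst f) \<subseteq> {1}" "weq True u f"
    using norm13[OF us] by auto
  have "coset True 3 y = coset True 3 (x @ u)" using coset_weq[OF xy] u_def by simp
  also have "\<dots> = coset True 3 (x @ f)" using coset_weq[OF weq_congL[OF f(2)]] .
  also have "\<dots> = coset True 3 x" by (rule coset_app) (use f(1) in auto)
  finally show ?thesis .
qed

lemma par_vert3:
  assumes "v \<in> verts False" "fst v = 3" "x \<in> snd v" "y \<in> snd v"
  shows "even (cnt3 x) = even (cnt3 y)"
proof -
  obtain i g where vg: "v = (i, coset False i g)" using assms(1) unfolding verts_def by auto
  then show ?thesis using par_coset[of x False 3 g y] assms by auto
qed

lemma rho_vert2:
  assumes "v \<in> verts False" "fst v = 2" "a \<in> verts False" "b \<in> verts False"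
    "fst a = 3" "fst b = 3" "x \<in> snd a" "x \<in> snd v" "y \<in> snd v" "y \<in> snd b"
    "even (cnt3 x) = even (cnt3 y)"
  shows "rho a = rho b"
proof -
  obtain i h where vg: "v = (i, coset False i h)" using assms(1) unfolding verts_def by auto
  then have "coset True 3 y = coset True 3 x" using key2[of x h y] assms by auto
  then show ?thesis using rho_eq[OF assms(3) assms(7)] rho_eq[OF assms(4) assms(10)] assms by simp
qed

theorem mainTheorem14:
  fixes \<gamma> :: "nat \<Rightarrow> vertex" and L :: "vertex set set"
  assumes closed: "\<gamma> 10 = \<gamma> 0"
    and edges: "\<forall>i<10. \<gamma> i \<noteq> \<gamma> (Suc i) \<and> {\<gamma> i, \<gamma> (Suc i)} \<in> simplices False"
    and types: "\<forall>i\<le>10. fst (\<gamma> i) = (if even i then 3 else 2)"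
    and falk: "falk_subcomplex_s3 L"
    and contained: "\<forall>i<10. {\<gamma> i, \<gamma> (Suc i)} \<in> L"
  shows "\<not> inj_on \<gamma> {0..<10}"
proof
  assume inj: "inj_on \<gamma> {0..<10}"
  have injr: "inj_on rho (\<Union> L)" using falk unfolding falk_subcomplex_s3_def by blast
  have V0: "\<gamma> i \<in> verts False \<and> \<gamma> (Suc i) \<in> verts False" if "i < 10" for i
    using edges that unfolding simplices_def by blast
  have V: "\<gamma> i \<in> verts False" if "i \<le> 10" for i
    using V0[of i] V0[of 9] that by (cases "i = 10") auto
  have L0: "\<gamma> i \<in> \<Union> L \<and> \<gamma> (Suc i) \<in> \<Union> L" if "i < 10" for i
    using contained that by blast
  have LL: "\<gamma> i \<in> \<Union> L" if "i \<le> 10" for i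
    using L0[of i] L0[of 9] that by (cases "i = 10") auto
  have "\<forall>i<10. \<exists>x. x \<in> snd (\<gamma> i) \<and> x \<in> snd (\<gamma> (Suc i))"
  proof (intro allI impI)
    fix i :: nat assume "i < 10"
    then have "\<Inter> (snd ` {\<gamma> i, \<gamma> (Suc i)}) \<noteq> {}" using edges unfolding simplices_def by blast
    then show "\<exists>x. x \<in> snd (\<gamma> i) \<and> x \<in> snd (\<gamma> (Suc i))" by auto
  qed
  then obtain z where z: "\<And>i. i < 10 \<Longrightarrow> z i \<in> snd (\<gamma> i) \<and> z i \<in> snd (\<gamma> (Suc i))"
    by metis
  define p where "p i = even (cnt3 (z i))" for i
  have same0: "p (Suc i) = p (Suc (Suc i))" if "i < 8" "even i" for i
  proof -
    have "fst (\<gamma> (Suc (Suc i))) = 3" using types that by auto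
    then show ?thesis unfolding p_def
      using par_vert3[OF V[of "Suc (Suc i)"]] z[of "Suc i"] z[of "Suc (Suc i)"] that by auto
  qed
  have same: "p (i+1) = p (i+2)" if "i < 8" "even i" for i
    using same0[OF that] by simp
  have same9: "p 9 = p 0"
  proof -
    have "fst (\<gamma> 0) = 3" using types by auto
    then show ?thesis unfolding p_def
      using par_vert3[OF V[of 0]] z[of 9] z[of 0] closed by (auto simp: numeral_eq_Suc)
  qed
  have flip: "p (2*k) \<noteq> p (Suc (2*k))" if "k < 5" for k
  proof
    assume eq: "p (2*k) = p (Suc (2*k))"
    have "rho (\<gamma> (2*k)) = rho (\<gamma> (Suc (Suc (2*k))))"
      apply (rule rho_vert2[of "\<gamma> (Suc (2*k))" _ _ "z (2*k)" "z (Suc (2*k))"])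
      using V[of "2*k"] V[of "Suc (2*k)"] V[of "Suc (Suc (2*k))"] types z[of "2*k"] z[of "Suc (2*k)"]
        eq that unfolding p_def by auto
    then have ee: "\<gamma> (2*k) = \<gamma> (Suc (Suc (2*k)))"
      using injr LL[of "2*k"] LL[of "Suc (Suc (2*k))"] that unfolding inj_on_def by auto
    show False
    proof (cases "k = 4")
      case True
      then have "\<gamma> 8 = \<gamma> 0" using ee closed by (simp add: numeral_eq_Suc)
      then show False using inj unfolding inj_on_def by (metis atLeastLessThan_iff zero_le numeral_neq_zero less_numeral_extra(1) rel_simps)
    next
      case False
      then have "2*k < 10" "Suc (Suc (2*k)) < 10" using that by auto
      then have "2*k = Suc (Suc (2*k))" using inj ee unfolding inj_on_def by simp
      then show False by simp
    qed
  qed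
  have "p 0 \<noteq> p 1" "p 2 \<noteq> p 3" "p 4 \<noteq> p 5" "p 6 \<noteq> p 7" "p 8 \<noteq> p 9"
    using flip[of 0] flip[of 1] flip[of 2] flip[of 3] flip[of 4] by auto
  moreover have "p 1 = p 2" using same[of 0] by (simp add: numeral_2_eq_2)
  moreover have "p 3 = p 4" using same[of 2] by simp
  moreover have "p 5 = p 6" using same[of 4] by simp
  moreover have "p 7 = p 8" using same[of 6] by simp
  ultimately show False using same9 by blast
qed

end
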